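(* Let $r\le n$, let $T'\in\mathbb{R}^n\otimes\mathbb{R}^n\otimes\mathbb{R}^n$ be a symmetric tensor with a decomposition $T'=\sum_{i=1}^r(u'_i)^{\otimes3}$, $u'_i\in\mathbb{R}^n$, and let $U'\in\mathbb{R}^{r\times n}$ be the matrix with rows $u'_i$. Let $\sigma>0$, let $U\in\mathbb{R}^{r\times n}$ have independent entries $U_{ij}\sim\mathcal N(U'_{ij},\sigma^2)$, and let $T=\sum_{i=1}^ru_i^{\otimes3}$ where $u_1,\dots,u_r$ are the rows of $U$. Then $$\kappa(T)\le 98\sigma^2n^3+2n\|U'\|_F^2+\frac{e^2n^4}{\sigma^2}$$ with probability at least $1-\big(\frac1{\sqrt n}+e^{-2n/\pi^2}\big)$.
   Context: $\kappa(T)=\|U\|_F^2+\|U^\dagger\|_F^2$, where $U$ is the matrix whose rows are the vectors $u_i$ of the decomposition $T=\sum u_i^{\otimes3}$ and $U^\dagger$ is its Moore–Penrose pseudoinverse. *)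

theory Defs
  imports "HOL-Probability.Probability"
begin

text \<open>Matrices in R^(r x n) are represented as real^'n^'r (rows indexed by 'r).\<close>

definition frob_sq :: "real^'n^'m \<Rightarrow> real" where
  "frob_sq A = (\<Sum>i\<in>UNIV. \<Sum>j\<in>UNIV. (A $ i $ j)\<^sup>2)"

definition pinv :: "real^'n^'m \<Rightarrow> real^'m^'n" where
  "pinv A = (THE X. A ** X ** A = A \<and> X ** A ** X = X \<and>
                    transpose (A ** X) = A ** X \<and> transpose (X ** A) = X ** A)"

definition tensor_of_rows :: "real^'n^'r \<Rightarrow> 'n \<Rightarrow> 'n \<Rightarrow> 'n \<Rightarrow> real" where
  "tensor_of_rows U a b c = (\<Sum>i\<in>UNIV. U $ i $ a * U $ i $ b * U $ i $ c)"

definition kappa :: "real^'n^'r \<Rightarrow> real" where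
  "kappa U = frob_sq U + frob_sq (pinv U)"

definition gauss_matrix_measure :: "real^'n^'r \<Rightarrow> real \<Rightarrow> ('r \<times> 'n \<Rightarrow> real) measure" where
  "gauss_matrix_measure U' \<sigma> =
     PiM UNIV (\<lambda>(i, j). density lborel (normal_density (U' $ i $ j) \<sigma>))"

definition mat_of_entries :: "('r \<times> 'n \<Rightarrow> real) \<Rightarrow> real^'n^'r" where
  "mat_of_entries X = (\<chi> i j. X (i, j))"

end

theory Submission
  imports Defs
begin


definition pen :: "real^'n^'m \<Rightarrow> real^'m^'n \<Rightarrow> bool" where
  "pen A X \<longleftrightarrow> A ** X ** A = A \<and> X ** A ** X = X \<and>
                    transpose (A ** X) = A ** X \<and> transpose (X ** A) = X ** A"

lemma pen_unique:
  assumes "pen A X" "pen A Y" shows "X = Y"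
proof -
  have a1: "A ** X ** A = A" "X ** A ** X = X" "transpose (A ** X) = A ** X" "transpose (X ** A) = X ** A"
    using assms(1) by (auto simp: pen_def)
  have b1: "A ** Y ** A = A" "Y ** A ** Y = Y" "transpose (A ** Y) = A ** Y" "transpose (Y ** A) = Y ** A"
    using assms(2) by (auto simp: pen_def)
  have tA1: "transpose A = transpose A ** A ** Y"
  proof -
    have "transpose A = transpose (A ** Y ** A)" using b1 by simp
    also have "\<dots> = transpose A ** (transpose (A ** Y))" by (simp add: matrix_transpose_mul matrix_mul_assoc)
    also have "\<dots> = transpose A ** (A ** Y)" using b1 by simp
    finally show ?thesis  by (simp add: matrix_mul_assoc)
  qed
  have tA2: "transpose A = X ** A ** transpose A"
  proof -
    have "transpose A = transpose (A ** X ** A)" using a1 by simp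
    also have "\<dots> = (transpose (X ** A)) ** transpose A" by (simp add: matrix_transpose_mul matrix_mul_assoc)
    also have "\<dots> = X ** A ** transpose A" using a1 by simp
    finally show ?thesis .
  qed
  have "X = X ** (A ** X)" using a1 by (simp add: matrix_mul_assoc)
  also have "\<dots> = X ** transpose (A ** X)" using a1 by simp
  also have "\<dots> = X ** transpose X ** transpose A" by (simp add: matrix_transpose_mul matrix_mul_assoc)
  also have "\<dots> = X ** transpose X ** (transpose A ** A ** Y)" using tA1 by metis
  also have "\<dots> = X ** transpose (A ** X) ** A ** Y" by (simp add: matrix_transpose_mul matrix_mul_assoc)
  also have "\<dots> = X ** A ** X ** A ** Y" using a1 by (simp add: matrix_mul_assoc)
  also have "\<dots> = X ** A ** Y" using a1 by simp
  finally have x: "X = X ** A ** Y" .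
  have "Y = (Y ** A) ** Y" using b1 by simp
  also have "\<dots> = transpose (Y ** A) ** Y" using b1 by simp
  also have "\<dots> = transpose A ** transpose Y ** Y" by (simp add: matrix_transpose_mul)
  also have "\<dots> = (X ** A ** transpose A) ** transpose Y ** Y" using tA2 by metis
  also have "\<dots> = X ** A ** transpose (Y ** A) ** Y" by (simp add: matrix_transpose_mul matrix_mul_assoc)
  also have "\<dots> = X ** A ** (Y ** A ** Y)" using b1(4) by (metis matrix_mul_assoc)
  also have "\<dots> = X ** A ** Y" using b1 by simp
  finally show ?thesis using x by simp
qed

lemma proj_exists:
  fixes S :: "'a::euclidean_space set" assumes S: "subspace S"
  obtains P where "linear P" "\<And>x. P x \<in> S" "\<And>x. x \<in> S \<Longrightarrow> P x = x"
    "\<And>x s. s \<in> S \<Longrightarrow> (x - P x) \<bullet> s = 0" "\<And>x y. P x \<bullet> y = x \<bullet> P y"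
proof -
  define Q where "Q x y \<longleftrightarrow> y \<in> S \<and> (\<forall>s\<in>S. (x - y) \<bullet> s = 0)" for x y
  have ex: "\<exists>y. Q x y" for x
  proof -
    obtain y z where "y \<in> span S" "\<And>w. w \<in> span S \<Longrightarrow> orthogonal z w" "x = y + z"
      using orthogonal_subspace_decomp_exists by blast
    then show ?thesis unfolding Q_def using S span_eq_iff
      by (metis add_diff_cancel_left' orthogonal_def span_superset)
  qed
  have un: "y1 = y2" if "Q x y1" "Q x y2" for x y1 y2
  proof -
    have "y1 - y2 \<in> S" using that S unfolding Q_def by (simp add: subspace_diff)
    then have "(x - y2) \<bullet> (y1 - y2) = 0" "(x - y1) \<bullet> (y1 - y2) = 0" using that unfolding Q_def by auto
    then have "(y1 - y2) \<bullet> (y1 - y2) = 0" by (simp add: algebra_simps inner_diff_left)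
    then show ?thesis by simp
  qed
  define P where "P x = (SOME y. Q x y)" for x
  have PQ: "Q x (P x)" for x unfolding P_def using ex by (rule someI_ex)
  have Pchar: "P x = y" if "Q x y" for x y using un PQ that by blast
  have lin: "linear P"
  proof (rule linearI)
    fix x y show "P (x + y) = P x + P y"
      apply (rule Pchar) using PQ[of x] PQ[of y] S unfolding Q_def
      by (auto simp: subspace_add algebra_simps inner_diff_left inner_add_left)
  next
    fix c x show "P (c *\<^sub>R x) = c *\<^sub>R P x"
      apply (rule Pchar) using PQ[of x] S unfolding Q_def
      by (auto simp: subspace_scale algebra_simps inner_diff_left)
  qed
  have 2: "P x \<in> S" for x using PQ unfolding Q_def by auto
  have 3: "P x = x" if "x \<in> S" for x apply (rule Pchar) using that unfolding Q_def by auto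
  have 4: "(x - P x) \<bullet> s = 0" if "s \<in> S" for x s using PQ that unfolding Q_def by auto
  have 5: "P x \<bullet> y = x \<bullet> P y" for x y
  proof -
    have "P x \<bullet> y = P x \<bullet> P y + (y - P y) \<bullet> P x" by (simp add: algebra_simps inner_diff_left inner_commute)
    moreover have "x \<bullet> P y = P x \<bullet> P y + (x - P x) \<bullet> P y" by (simp add: algebra_simps inner_diff_left inner_commute)
    ultimately show ?thesis using 4 2 by simp
  qed
  show ?thesis using that lin 2 3 4 5 by blast
qed

lemma sym_matrix:
  fixes M :: "real^'n^'n"
  assumes "\<And>x y. (M *v x) \<bullet> y = x \<bullet> (M *v y)"
  shows "transpose M = M"
proof -
  have "M $ j $ i = M $ i $ j" for i j
    using assms[of "axis i 1" "axis j 1"]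
    by (simp add: inner_axis inner_axis' matrix_vector_mul_component)
  then show ?thesis by (simp add: vec_eq_iff transpose_def)
qed

lemma pen_exists: "\<exists>X. pen (A::real^'n^'m) X"
proof -
  define R where "R = span (range (\<lambda>i. A $ i))"
  define C where "C = range (\<lambda>x. A *v x)"
  have sR: "subspace R" unfolding R_def by simp
  have sC: "subspace C" unfolding C_def
    using linear_subspace_image[OF matrix_vector_mul_linear subspace_UNIV] by (simp add: image_def)
  obtain PR where PR: "linear PR" "\<And>x. PR x \<in> R" "\<And>x. x \<in> R \<Longrightarrow> PR x = x"
    "\<And>x s. s \<in> R \<Longrightarrow> (x - PR x) \<bullet> s = 0" "\<And>x y. PR x \<bullet> y = x \<bullet> PR y"
    using proj_exists[OF sR] by blast
  obtain PC where PC: "linear PC" "\<And>x. PC x \<in> C" "\<And>x. x \<in> C \<Longrightarrow> PC x = x"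
    "\<And>x s. s \<in> C \<Longrightarrow> (x - PC x) \<bullet> s = 0" "\<And>x y. PC x \<bullet> y = x \<bullet> PC y"
    using proj_exists[OF sC] by blast
  have F1: "z = 0" if "z \<in> R" "A *v z = 0" for z
  proof -
    have "orthogonal z s" if "s \<in> R" for s
      using that unfolding R_def
    proof (rule orthogonal_to_span)
      fix y assume "y \<in> range (\<lambda>i. A $ i)"
      then obtain i where "y = A $ i" by auto
      then show "orthogonal z y" using \<open>A *v z = 0\<close>
        by (metis inner_commute matrix_vector_mul_component orthogonal_def zero_index)
    qed
    then show ?thesis using that(1) by (metis inner_eq_zero_iff orthogonal_def)
  qed
  have F2: "A *v PR x = A *v x" for x
  proof -
    have "(A *v (x - PR x)) $ i = 0" for i
      using PR(4)[of "A $ i" x] span_base[of "A $ i" "range (\<lambda>i. A $ i)"]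
      unfolding matrix_vector_mul_component R_def
      by (simp add: inner_commute)
    then have "A *v (x - PR x) = 0" by (simp add: vec_eq_iff)
    then show ?thesis by (simp add: matrix_vector_mult_diff_distrib)
  qed
  have F3: "PC (A *v x) = A *v x" for x using PC(3) unfolding C_def by auto
  define col where "col j = PR (SOME z. A *v z = PC (axis j 1))" for j
  have colA: "A *v col j = PC (axis j 1)" for j
  proof -
    have "\<exists>z. A *v z = PC (axis j 1)" using PC(2)[of "axis j 1"] unfolding C_def by auto
    then show ?thesis unfolding col_def F2 by (rule someI_ex)
  qed
  define X :: "real^'m^'n" where "X = (\<chi> a j. col j $ a)"
  have Xv: "X *v y = (\<Sum>j\<in>UNIV. y $ j *\<^sub>R col j)" for y
    by (simp add: matrix_mult_sum X_def column_def scalar_mult_eq_scaleR)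
  have XR: "X *v y \<in> R" for y unfolding Xv using PR(2) sR
    by (simp add: subspace_sum subspace_scale col_def)
  have AX: "A *v (X *v y) = PC y" for y
  proof -
    have "A *v (X *v y) = (\<Sum>j\<in>UNIV. y $ j *\<^sub>R (A *v col j))"
      unfolding Xv by (simp add: linear_sum[OF matrix_vector_mul_linear] linear_scale[OF matrix_vector_mul_linear])
    also have "\<dots> = PC (\<Sum>j\<in>UNIV. y $ j *\<^sub>R axis j 1)"
      by (simp add: colA linear_sum[OF PC(1)] linear_scale[OF PC(1)])
    also have "(\<Sum>j\<in>UNIV. y $ j *\<^sub>R axis j 1) = y"
      using basis_expansion[of y] by (simp add: scalar_mult_eq_scaleR)
    finally show ?thesis .
  qed
  have XA: "X *v (A *v x) = PR x" for x
  proof -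
    have "X *v (A *v x) - PR x = 0"
    proof (rule F1)
      show "X *v (A *v x) - PR x \<in> R" using XR PR(2) sR by (simp add: subspace_diff)
      show "A *v (X *v (A *v x) - PR x) = 0"
        by (simp add: matrix_vector_mult_diff_distrib AX F3 F2)
    qed
    then show ?thesis by simp
  qed
  have "pen A X" unfolding pen_def
  proof (intro conjI)
    show "A ** X ** A = A" unfolding matrix_eq
      by (simp add: matrix_vector_mul_assoc[symmetric] AX F3)
    show "X ** A ** X = X" unfolding matrix_eq
      by (simp add: matrix_vector_mul_assoc[symmetric] XA PR(3) XR)
    show "transpose (A ** X) = A ** X"
      by (rule sym_matrix) (simp add: matrix_vector_mul_assoc[symmetric] AX PC(5))
    show "transpose (X ** A) = X ** A"
      by (rule sym_matrix) (simp add: matrix_vector_mul_assoc[symmetric] XA PR(5))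
  qed
  then show ?thesis by blast
qed

lemma pen_pinv: "pen A (pinv A)"
proof -
  have "\<exists>!X. pen A X" using pen_exists pen_unique by blast
  then show ?thesis unfolding pinv_def pen_def[symmetric] by (rule theI')
qed

lemma pinv_eq: "pen A X \<Longrightarrow> pinv A = X"
  using pen_pinv pen_unique by blast


lemma frob_sq_col: "frob_sq (M::real^'a^'b) = (\<Sum>j\<in>UNIV. column j M \<bullet> column j M)"
  unfolding frob_sq_def column_def inner_vec_def
  by (simp add: power2_eq_square sum.swap[of _ "UNIV::'b set"])

lemma frob_sq_nonneg: "frob_sq M \<ge> 0"
  unfolding frob_sq_def by (intro sum_nonneg) auto

lemma pinv_frob_le:
  fixes A :: "real^'n^'m" and W :: "real^'m^'n"
  assumes AW: "A ** W = mat 1"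
  shows "frob_sq (pinv A) \<le> frob_sq W"
proof -
  define X where "X = pinv A"
  have p: "A ** X ** A = A" "X ** A ** X = X" "transpose (X ** A) = X ** A"
    using pen_pinv[of A] unfolding X_def pen_def by auto
  define Q where "Q = X ** A"
  have XQ: "X = Q ** W"
  proof -
    have "X = X ** (A ** W)" using AW by simp
    then show ?thesis unfolding Q_def by (simp add: matrix_mul_assoc)
  qed
  have QQ: "Q ** Q = Q" unfolding Q_def using p by (metis matrix_mul_assoc)
  have Qs: "(Q *v x) \<bullet> y = x \<bullet> (Q *v y)" for x y
  proof -
    have "(Q *v x) \<bullet> y = (transpose Q *v x) \<bullet> y" using p unfolding Q_def by simp
    also have "\<dots> = x \<bullet> (Q *v y)" by (simp add: dot_lmul_matrix)
    finally show ?thesis .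
  qed
  have vle: "(Q *v w) \<bullet> (Q *v w) \<le> w \<bullet> w" for w
  proof -
    have "(Q *v w) \<bullet> (Q *v w) = w \<bullet> (Q *v (Q *v w))" by (rule Qs)
    also have "\<dots> = w \<bullet> (Q *v w)" by (simp add: matrix_vector_mul_assoc QQ)
    finally have e: "(Q *v w) \<bullet> (Q *v w) = w \<bullet> (Q *v w)" .
    have "w \<bullet> w = (Q *v w) \<bullet> (Q *v w) + (w - Q *v w) \<bullet> (w - Q *v w) + 2 * ((Q *v w) \<bullet> (w - Q *v w))"
      by (simp add: inner_diff_left inner_diff_right inner_commute algebra_simps)
    moreover have "(Q *v w) \<bullet> (w - Q *v w) = 0" using e by (simp add: inner_diff_right inner_commute)
    ultimately show ?thesis by simp
  qed
  have col: "column j (Q ** W) = Q *v column j W" for j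
    by (simp add: vec_eq_iff column_def matrix_matrix_mult_def matrix_vector_mult_def)
  show ?thesis unfolding X_def[symmetric] XQ frob_sq_col col
    by (intro sum_mono vle)
qed


lemma frob_sq_norm: "frob_sq (M::real^'a^'b) = (norm M)\<^sup>2"
  unfolding frob_sq_def power2_norm_eq_inner inner_vec_def
  by (simp add: power2_eq_square)

lemma cont_mm[continuous_intros]:
  fixes f :: "'x::topological_space \<Rightarrow> real^'n^'m" and g :: "'x \<Rightarrow> real^'k^'n"
  assumes "continuous_on S f" "continuous_on S g"
  shows "continuous_on S (\<lambda>x. f x ** g x)"
  unfolding matrix_matrix_mult_def using assms
  by (intro continuous_intros)

lemma cont_tr[continuous_intros]:
  fixes f :: "'x::topological_space \<Rightarrow> real^'n^'m"
  assumes "continuous_on S f"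
  shows "continuous_on S (\<lambda>x. transpose (f x))"
  unfolding transpose_def using assms
  by (intro continuous_intros)

lemma closed_kappa: "closed {A::real^'n^'r. kappa A \<le> c}"
proof -
  define S where "S = {Y::real^'r^'n. frob_sq Y \<le> c}"
  define T where "T = {p::(real^'r^'n) \<times> (real^'n^'r). pen (snd p) (fst p) \<and> frob_sq (snd p) + frob_sq (fst p) \<le> c}"
  have eq: "{A::real^'n^'r. kappa A \<le> c} = {A. \<exists>Y. Y \<in> S \<and> (Y, A) \<in> T}"
  proof (intro set_eqI iffI; simp)
    fix A :: "real^'n^'r" assume "kappa A \<le> c"
    then show "\<exists>Y. Y \<in> S \<and> (Y, A) \<in> T" unfolding S_def T_def kappa_def
      using pen_pinv[of A] frob_sq_nonneg[of A] by (intro exI[of _ "pinv A"]) auto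
  next
    fix A :: "real^'n^'r" assume "\<exists>Y. Y \<in> S \<and> (Y, A) \<in> T"
    then show "kappa A \<le> c" unfolding S_def T_def kappa_def using pinv_eq by auto
  qed
  have cS: "compact S" unfolding compact_eq_bounded_closed
  proof
    show "bounded S" unfolding bounded_iff S_def frob_sq_norm
      by (intro exI[of _ "sqrt c"]) (auto intro: real_le_rsqrt)
    show "closed S" unfolding S_def frob_sq_norm
      by (intro closed_Collect_le continuous_intros)
  qed
  have cT: "closed T" unfolding T_def pen_def frob_sq_norm
    by (intro closed_Collect_conj closed_Collect_eq closed_Collect_le continuous_intros)
  show ?thesis unfolding eq using closed_compact_projection[OF cS cT] by simp
qed



lemma gauss_lin:
  fixes J :: "'i set" and \<mu> c :: "'i \<Rightarrow> real"
  assumes fin: "finite J" and sig: "\<sigma> > 0" and c1: "(\<Sum>p\<in>J. (c p)\<^sup>2) = 1" and t: "t > 0"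
  shows "emeasure (PiM J (\<lambda>p. density lborel (normal_density (\<mu> p) \<sigma>)))
           {y \<in> space (PiM J (\<lambda>p. density lborel (normal_density (\<mu> p) \<sigma>))). \<bar>\<Sum>p\<in>J. c p * y p\<bar> < t}
         \<le> ennreal (2 * t / sqrt (2 * pi * \<sigma>\<^sup>2))"
proof -
  define G where "G = (\<lambda>p. density lborel (normal_density (\<mu> p) \<sigma>))"
  define P where "P = PiM J G"
  have pG: "prob_space (G p)" for p unfolding G_def using prob_space_normal_density sig by blast
  interpret G: product_prob_space G UNIV
    by (intro product_prob_space.intro product_sigma_finite.intro product_prob_space_axioms.intro pG prob_space_imp_sigma_finite)
  interpret P: prob_space P unfolding P_def by (rule prob_space_PiM) (rule pG)
  have setsG: "sets (G p) = sets borel" for p unfolding G_def by simp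
  define Jv where "Jv = {p\<in>J. c p \<noteq> 0}"
  have Jv_ne: "Jv \<noteq> {}"
  proof
    assume "Jv = {}"
    then have "\<forall>p\<in>J. c p = 0" unfolding Jv_def by auto
    then show False using c1 by simp
  qed
  have Jv_fin: "finite Jv" "Jv \<subseteq> J" using fin unfolding Jv_def by auto
  have sumeq: "(\<Sum>p\<in>J. c p * y p) = (\<Sum>p\<in>Jv. c p * y p)" for y
    by (rule sum.mono_neutral_right[OF fin]) (auto simp: Jv_def)
  have c1': "(\<Sum>p\<in>Jv. (c p)\<^sup>2) = 1"
    using c1 sum.mono_neutral_right[OF fin Jv_fin(2), of "\<lambda>p. (c p)\<^sup>2"] by (auto simp: Jv_def)
  have comp_meas: "(\<lambda>y. y p) \<in> measurable P (G p)" if "p \<in> J" for p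
    unfolding P_def using that by (rule measurable_component_singleton)
  have comp_dist: "distributed P lborel (\<lambda>y. y p) (normal_density (\<mu> p) \<sigma>)" if "p \<in> J" for p
  proof -
    have "distr P lborel (\<lambda>y. y p) = distr P (G p) (\<lambda>y. y p)"
      by (rule distr_cong) (simp_all add: setsG)
    also have "\<dots> = G p" unfolding P_def using that by (intro distr_PiM_component pG)
    finally have 1: "distr P lborel (\<lambda>y. y p) = density lborel (normal_density (\<mu> p) \<sigma>)"
      unfolding G_def .
    have 2: "(\<lambda>y. y p) \<in> measurable P lborel"
      using comp_meas[OF that] by (simp add: measurable_cong_sets[OF refl setsG[of p]])
    show ?thesis unfolding distributed_def using 1 2 by simp
  qed
  have ind0: "P.indep_vars G (\<lambda>p y. y p) Jv"
  proof (subst P.indep_vars_iff_distr_eq_PiM'[OF Jv_ne])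
    show "(\<lambda>y. y p) \<in> measurable P (G p)" if "p \<in> Jv" for p
      using comp_meas that Jv_fin by blast
    have "distr P (PiM Jv G) (\<lambda>x. \<lambda>p\<in>Jv. x p) = PiM Jv G"
      unfolding P_def using G.distr_restrict[OF Jv_fin(2) fin] by simp
    also have "\<dots> = PiM Jv (\<lambda>p. distr P (G p) (\<lambda>y. y p))"
      unfolding P_def using Jv_fin by (intro PiM_cong refl distr_PiM_component[symmetric] pG) auto
    finally show "distr P (PiM Jv G) (\<lambda>x. \<lambda>p\<in>Jv. x p) = PiM Jv (\<lambda>p. distr P (G p) (\<lambda>y. y p))" .
  qed
  have ind: "P.indep_vars (\<lambda>_. borel) (\<lambda>p y. c p * y p) Jv"
    by (rule P.indep_vars_compose2[OF ind0]) (auto simp: measurable_cong_sets[OF setsG refl])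
  have aff: "distributed P lborel (\<lambda>y. c p * y p) (normal_density (c p * \<mu> p) (\<bar>c p\<bar> * \<sigma>))" if "p \<in> Jv" for p
    using P.normal_density_affine[OF comp_dist sig, of p "c p" 0] that Jv_fin by (auto simp: Jv_def)
  have "distributed P lborel (\<lambda>y. \<Sum>p\<in>Jv. c p * y p)
      (normal_density (\<Sum>p\<in>Jv. c p * \<mu> p) (sqrt (\<Sum>p\<in>Jv. (\<bar>c p\<bar> * \<sigma>)\<^sup>2)))"
    by (rule P.sum_indep_normal[OF Jv_fin(1) Jv_ne ind]) (use sig aff in \<open>auto simp: Jv_def\<close>)
  moreover have "sqrt (\<Sum>p\<in>Jv. (\<bar>c p\<bar> * \<sigma>)\<^sup>2) = \<sigma>"
  proof -
    have "(\<Sum>p\<in>Jv. (\<bar>c p\<bar> * \<sigma>)\<^sup>2) = \<sigma>\<^sup>2 * (\<Sum>p\<in>Jv. (c p)\<^sup>2)"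
      by (simp add: sum_distrib_left power_mult_distrib mult.commute)
    then show ?thesis using c1' sig by simp
  qed
  ultimately have D: "distributed P lborel (\<lambda>y. \<Sum>p\<in>J. c p * y p) (normal_density (\<Sum>p\<in>Jv. c p * \<mu> p) \<sigma>)"
    by (simp add: sumeq)
  define m where "m = (\<Sum>p\<in>Jv. c p * \<mu> p)"
  have "{y \<in> space P. \<bar>\<Sum>p\<in>J. c p * y p\<bar> < t} = (\<lambda>y. \<Sum>p\<in>J. c p * y p) -` {-t<..<t} \<inter> space P"
    by auto
  then have "emeasure P {y \<in> space P. \<bar>\<Sum>p\<in>J. c p * y p\<bar> < t}
      = (\<integral>\<^sup>+z. ennreal (normal_density m \<sigma> z) * indicator {-t<..<t} z \<partial>lborel)"
    using distributed_emeasure[OF D[folded m_def], of "{-t<..<t}"] by simp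
  also have "\<dots> \<le> (\<integral>\<^sup>+z. ennreal (1 / sqrt (2 * pi * \<sigma>\<^sup>2)) * indicator {-t<..<t} z \<partial>lborel)"
  proof (intro nn_integral_mono)
    fix z
    have "normal_density m \<sigma> z \<le> 1 / sqrt (2 * pi * \<sigma>\<^sup>2)"
    proof -
      have "exp (- ((z - m)\<^sup>2 / (2 * \<sigma>\<^sup>2))) \<le> 1" by simp
      then show ?thesis unfolding normal_density_def
        by (simp add: divide_right_mono)
    qed
    then show "ennreal (normal_density m \<sigma> z) * indicator {-t<..<t} z
       \<le> ennreal (1 / sqrt (2 * pi * \<sigma>\<^sup>2)) * indicator {-t<..<t} z"
      by (auto simp: indicator_def)
  qed
  also have "\<dots> = ennreal (1 / sqrt (2 * pi * \<sigma>\<^sup>2)) * ennreal (2 * t)"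
    using t by (simp add: nn_integral_cmult_indicator)
  also have "\<dots> = ennreal (2 * t / sqrt (2 * pi * \<sigma>\<^sup>2))"
    using t by (simp add: ennreal_mult'[symmetric])
  finally show ?thesis unfolding P_def G_def .
qed


lemma normal_second_moment:
  assumes sig: "\<sigma> > 0"
  shows "(\<integral>\<^sup>+z. ennreal ((z - \<mu>)\<^sup>2) \<partial>density lborel (normal_density \<mu> \<sigma>)) = ennreal (\<sigma>\<^sup>2)"
proof -
  have "(\<integral>\<^sup>+z. ennreal ((z - \<mu>)\<^sup>2) \<partial>density lborel (normal_density \<mu> \<sigma>))
      = (\<integral>\<^sup>+z. ennreal (normal_density \<mu> \<sigma> z) * ennreal ((z - \<mu>)\<^sup>2) \<partial>lborel)"
    by (subst nn_integral_density) auto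
  also have "\<dots> = (\<integral>\<^sup>+z. ennreal (normal_density \<mu> \<sigma> z * (z - \<mu>)\<^sup>2) \<partial>lborel)"
    by (intro nn_integral_cong) (simp add: ennreal_mult' normal_density_nonneg)
  also have "\<dots> = ennreal (integral\<^sup>L lborel (\<lambda>z. normal_density \<mu> \<sigma> z * (z - \<mu>)\<^sup>2))"
    by (intro nn_integral_eq_integral integrable_normal_moment AE_I2)
       (simp_all add: normal_density_nonneg sig)
  also have "integral\<^sup>L lborel (\<lambda>z. normal_density \<mu> \<sigma> z * (z - \<mu>)\<^sup>2) = \<sigma>\<^sup>2"
    using integral_normal_moment_even[where k=1 and \<mu>=\<mu> and \<sigma>=\<sigma>] sig by simp
  finally show ?thesis .
qed

lemma markov_sq:
  fixes m :: "'i::finite \<Rightarrow> real"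
  assumes sig: "\<sigma> > 0" and c0: "c0 > 0"
  defines "MM \<equiv> PiM UNIV (\<lambda>p. density lborel (normal_density (m p) \<sigma>))"
  shows "emeasure MM {X \<in> space MM. c0 < (\<Sum>p\<in>UNIV. (X p - m p)\<^sup>2)} \<le> ennreal (real CARD('i) * \<sigma>\<^sup>2 / c0)"
proof -
  define G where "G = (\<lambda>p. density lborel (normal_density (m p) \<sigma>))"
  have pG: "prob_space (G p)" for p unfolding G_def using prob_space_normal_density sig by blast
  have setsG: "sets (G p) = sets borel" for p unfolding G_def by simp
  have cm: "(\<lambda>X. X p) \<in> borel_measurable MM" for p
    unfolding MM_def G_def[symmetric]
    using measurable_component_singleton[of p UNIV G]
    by (simp add: measurable_cong_sets[OF refl setsG[of p]])
  have Dm: "(\<lambda>X. \<Sum>p\<in>UNIV. (X p - m p)\<^sup>2) \<in> borel_measurable MM"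
    using cm by measurable
  define S where "S = {X \<in> space MM. c0 < (\<Sum>p\<in>UNIV. (X p - m p)\<^sup>2)}"
  have Sm: "S \<in> sets MM" unfolding S_def using Dm by measurable
  have comp: "(\<integral>\<^sup>+X. ennreal ((X p - m p)\<^sup>2) \<partial>MM) = ennreal (\<sigma>\<^sup>2)" for p
  proof -
    have "(\<integral>\<^sup>+X. ennreal ((X p - m p)\<^sup>2) \<partial>MM) = (\<integral>\<^sup>+z. ennreal ((z - m p)\<^sup>2) \<partial>distr MM (G p) (\<lambda>X. X p))"
    proof -
      have f1: "(\<lambda>X. X p) \<in> measurable MM (G p)"
        unfolding MM_def G_def[symmetric] by (rule measurable_component_singleton) auto
      have f2: "(\<lambda>z. ennreal ((z - m p)\<^sup>2)) \<in> borel_measurable (distr MM (G p) (\<lambda>X. X p))"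
        unfolding measurable_cong_sets[OF sets_distr refl] measurable_cong_sets[OF setsG refl] by measurable
      show ?thesis using nn_integral_distr[OF f1 f2] by simp
    qed
    also have "distr MM (G p) (\<lambda>X. X p) = G p"
      unfolding MM_def G_def[symmetric] by (intro distr_PiM_component pG) auto
    finally show ?thesis unfolding G_def using normal_second_moment[OF sig] by simp
  qed
  have "emeasure MM S = (\<integral>\<^sup>+X. indicator S X \<partial>MM)" using Sm by simp
  also have "\<dots> \<le> (\<integral>\<^sup>+X. ennreal (1 / c0) * (\<Sum>p\<in>UNIV. ennreal ((X p - m p)\<^sup>2)) \<partial>MM)"
  proof (intro nn_integral_mono)
    fix X assume "X \<in> space MM"
    have "(\<Sum>p\<in>UNIV. ennreal ((X p - m p)\<^sup>2)) = ennreal (\<Sum>p\<in>UNIV. (X p - m p)\<^sup>2)"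
      by (simp add: sum_ennreal)
    moreover have "indicator S X \<le> ennreal (1 / c0 * (\<Sum>p\<in>UNIV. (X p - m p)\<^sup>2))"
      using c0 by (auto simp: indicator_def S_def field_simps)
    ultimately show "indicator S X \<le> ennreal (1 / c0) * (\<Sum>p\<in>UNIV. ennreal ((X p - m p)\<^sup>2))"
      using c0 by (simp add: ennreal_mult'[symmetric] sum_nonneg)
  qed
  also have "\<dots> = ennreal (1 / c0) * (\<Sum>p\<in>UNIV. (\<integral>\<^sup>+X. ennreal ((X p - m p)\<^sup>2) \<partial>MM))"
  proof -
    have "(\<integral>\<^sup>+X. (\<Sum>p\<in>UNIV. ennreal ((X p - m p)\<^sup>2)) \<partial>MM) = (\<Sum>p\<in>UNIV. (\<integral>\<^sup>+X. ennreal ((X p - m p)\<^sup>2) \<partial>MM))"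
      by (rule nn_integral_sum) (use cm in measurable)
    moreover have "(\<lambda>X. (\<Sum>p\<in>UNIV. ennreal ((X p - m p)\<^sup>2))) \<in> borel_measurable MM"
      using cm by measurable
    ultimately show ?thesis by (simp only: nn_integral_cmult)
  qed
  also have "\<dots> = ennreal (real CARD('i) * \<sigma>\<^sup>2 / c0)"
    using c0 by (simp add: comp ennreal_mult'[symmetric] ennreal_of_nat_eq_real_of_nat)
  finally show ?thesis unfolding S_def .
qed


definition goodrow :: "real^'n^'r \<Rightarrow> 'r \<Rightarrow> real \<Rightarrow> bool" where
  "goodrow A i t \<longleftrightarrow> (\<exists>w. (\<forall>k. k \<noteq> i \<longrightarrow> A $ k \<bullet> w = 0) \<and> A $ i \<bullet> w = 1 \<and> norm w \<le> 1 / t)"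

lemma row_bad:
  fixes m :: "'r::finite \<times> 'n::finite \<Rightarrow> real" and i :: 'r
  assumes rn: "CARD('r) \<le> CARD('n)" and sig: "\<sigma> > 0" and t: "t > 0"
  defines "MM \<equiv> PiM UNIV (\<lambda>p. density lborel (normal_density (m p) \<sigma>))"
  assumes Bm: "B \<in> sets MM" and Bsub: "\<And>X. X \<in> B \<Longrightarrow> \<not> goodrow (mat_of_entries X) i t"
  shows "emeasure MM B \<le> ennreal (2 * t / sqrt (2 * pi * \<sigma>\<^sup>2))"
proof -
  define N where "N = (\<lambda>p. density lborel (normal_density (m p) \<sigma>))"
  have pN: "prob_space (N p)" for p unfolding N_def using prob_space_normal_density sig by blast
  interpret N: product_prob_space N UNIV
    by (intro product_prob_space.intro product_sigma_finite.intro product_prob_space_axioms.intro pN prob_space_imp_sigma_finite)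
  define I where "I = {p::'r\<times>'n. fst p \<noteq> i}"
  define J where "J = {p::'r\<times>'n. fst p = i}"
  have IJ: "I \<inter> J = {}" "I \<union> J = UNIV" unfolding I_def J_def by auto
  have Jr: "J = range (\<lambda>j. (i, j))" unfolding J_def by auto
  define b where "b = 2 * t / sqrt (2 * pi * \<sigma>\<^sup>2)"
  interpret PI: prob_space "PiM I N" by (rule prob_space_PiM) (rule pN)
  have sec: "emeasure (PiM J N) ((\<lambda>y. merge I J (x, y)) -` B \<inter> space (PiM J N)) \<le> ennreal b" for x
  proof -
    define rowk where "rowk k = (\<chi> j. x (k, j))" for k
    define V where "V = rowk ` (- {i})"
    have "dim V \<le> card V" by (rule dim_le_card) (auto simp: V_def span_superset)
    also have "\<dots> \<le> card (- {i})" unfolding V_def by (rule card_image_le) simp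
    also have "\<dots> < CARD('n)"
    proof -
      have "card (- {i}) = CARD('r) - 1" by (simp add: Compl_eq_Diff_UNIV card_Diff_subset)
      moreover have "CARD('r) \<ge> 1" by (simp add: Suc_leI)
      ultimately show ?thesis using rn by linarith
    qed
    finally have dV: "dim V < DIM(real^'n)" by simp
    obtain v0 where v0: "v0 \<noteq> 0" "\<And>y. y \<in> span V \<Longrightarrow> orthogonal v0 y"
      using orthogonal_to_subspace_exists[OF dV] by blast
    define v where "v = v0 /\<^sub>R norm v0"
    have nv: "norm v = 1" unfolding v_def using v0 by simp
    have vorth: "rowk k \<bullet> v = 0" if "k \<noteq> i" for k
    proof -
      have "rowk k \<in> span V" unfolding V_def using that by (intro span_base) auto
      then have "orthogonal v0 (rowk k)" by (rule v0)
      then show ?thesis unfolding v_def orthogonal_def by (simp add: inner_commute)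
    qed
    define c where "c p = v $ snd p" for p :: "'r \<times> 'n"
    have sumJ: "(\<Sum>p\<in>J. f p) = (\<Sum>j\<in>UNIV. f (i, j))" for f :: "'r \<times> 'n \<Rightarrow> real"
      unfolding Jr by (subst sum.reindex) (auto simp: inj_on_def)
    have c1: "(\<Sum>p\<in>J. (c p)\<^sup>2) = 1"
    proof -
      have "(\<Sum>p\<in>J. (c p)\<^sup>2) = v \<bullet> v" unfolding sumJ c_def inner_vec_def by (simp add: power2_eq_square)
      also have "\<dots> = 1" using nv by (simp add: dot_square_norm)
      finally show ?thesis .
    qed
    have "(\<lambda>y. merge I J (x, y)) -` B \<inter> space (PiM J N) \<subseteq> {y \<in> space (PiM J N). \<bar>\<Sum>p\<in>J. c p * y p\<bar> < t}"
    proof (intro subsetI CollectI conjI)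
      fix y assume y: "y \<in> (\<lambda>y. merge I J (x, y)) -` B \<inter> space (PiM J N)"
      then show "y \<in> space (PiM J N)" by simp
      show "\<bar>\<Sum>p\<in>J. c p * y p\<bar> < t"
      proof (rule ccontr)
        assume "\<not> \<bar>\<Sum>p\<in>J. c p * y p\<bar> < t"
        then have at: "\<bar>\<Sum>p\<in>J. c p * y p\<bar> \<ge> t" by simp
        define A where "A = mat_of_entries (merge I J (x, y))"
        have Ak: "A $ k = rowk k" if "k \<noteq> i" for k
          using that IJ unfolding A_def mat_of_entries_def rowk_def
          by (simp add: vec_eq_iff I_def)
        have Ai: "A $ i = (\<chi> j. y (i, j))"
          using IJ unfolding A_def mat_of_entries_def
          by (simp add: vec_eq_iff J_def)
        define a where "a = A $ i \<bullet> v"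
        have aeq: "a = (\<Sum>p\<in>J. c p * y p)"
          unfolding a_def Ai sumJ c_def inner_vec_def by (simp add: mult.commute)
        have a0: "a \<noteq> 0" using at t aeq by auto
        have "goodrow A i t" unfolding goodrow_def
        proof (intro exI[of _ "v /\<^sub>R a"] conjI allI impI)
          fix k assume "k \<noteq> i" then show "A $ k \<bullet> (v /\<^sub>R a) = 0" using Ak vorth by simp
        next
          show "A $ i \<bullet> (v /\<^sub>R a) = 1" using a0 unfolding a_def by simp
        next
          have "norm (v /\<^sub>R a) = 1 / \<bar>a\<bar>" using nv by (simp add: divide_inverse)
          also have "\<dots> \<le> 1 / t" using at t aeq by (intro divide_left_mono) auto
          finally show "norm (v /\<^sub>R a) \<le> 1 / t" .
        qed
        moreover have "merge I J (x, y) \<in> B" using y by simp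
        ultimately show False using Bsub unfolding A_def by blast
      qed
    qed
    then have "emeasure (PiM J N) ((\<lambda>y. merge I J (x, y)) -` B \<inter> space (PiM J N))
        \<le> emeasure (PiM J N) {y \<in> space (PiM J N). \<bar>\<Sum>p\<in>J. c p * y p\<bar> < t}"
    proof (rule emeasure_mono)
      have setsN: "sets (N p) = sets borel" for p unfolding N_def by simp
      have cmJ: "(\<lambda>y. y p) \<in> borel_measurable (PiM J N)" if "p \<in> J" for p
        using measurable_component_singleton[OF that, of N]
        by (simp add: measurable_cong_sets[OF refl setsN[of p]])
      have gm: "(\<lambda>y. \<bar>\<Sum>p\<in>J. c p * y p\<bar>) \<in> borel_measurable (PiM J N)"
        by (intro borel_measurable_abs borel_measurable_sum borel_measurable_times borel_measurable_const cmJ)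
      then show "{y \<in> space (PiM J N). \<bar>\<Sum>p\<in>J. c p * y p\<bar> < t} \<in> sets (PiM J N)"
        by measurable
    qed
    also have "\<dots> \<le> ennreal b"
      unfolding b_def N_def by (rule gauss_lin[OF _ sig c1 t]) (simp add: J_def)
    finally show ?thesis .
  qed
  have "emeasure MM B = emeasure (PiM (I \<union> J) N) B" unfolding MM_def N_def[symmetric] IJ(2) ..
  also have "\<dots> = (\<integral>\<^sup>+x. emeasure (PiM J N) ((\<lambda>y. merge I J (x, y)) -` B \<inter> space (PiM J N)) \<partial>PiM I N)"
    by (rule N.emeasure_fold_integral[OF IJ(1)]) (use Bm in \<open>auto simp: MM_def N_def[symmetric] IJ(2)\<close>)
  also have "\<dots> \<le> (\<integral>\<^sup>+x. ennreal b \<partial>PiM I N)" by (intro nn_integral_mono sec)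
  also have "\<dots> = ennreal b" using PI.emeasure_space_1 by simp
  finally show ?thesis unfolding b_def .
qed



lemma det_bound:
  fixes U U' :: "real^'n::finite^'r::finite"
  assumes rn: "CARD('r) \<le> CARD('n)" and sig: "\<sigma> > 0"
    and tdef: "t = \<sigma> / (exp 1 * real CARD('n) * sqrt (real CARD('n)))"
    and D: "frob_sq (U - U') \<le> 49 * \<sigma>\<^sup>2 * real CARD('n) ^ 3"
    and G: "\<And>i. goodrow U i t"
  shows "kappa U \<le> 98 * \<sigma>\<^sup>2 * real CARD('n) ^ 3 + 2 * real CARD('n) * frob_sq U'
                   + exp 2 * real CARD('n) ^ 4 / \<sigma>\<^sup>2"
proof -
  define n where "n = real CARD('n)"
  define r where "r = real CARD('r)"
  have n1: "n \<ge> 1" unfolding n_def by (simp add: Suc_leI)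
  have rn': "r \<le> n" unfolding r_def n_def using rn by simp
  have r0: "r \<ge> 0" unfolding r_def by simp
  have t0: "t > 0" unfolding tdef using sig n1 by (simp add: n_def[symmetric])
  have f1: "frob_sq U \<le> 2 * frob_sq U' + 2 * frob_sq (U - U')"
  proof -
    have "frob_sq U \<le> (\<Sum>i\<in>UNIV. \<Sum>j\<in>UNIV. 2 * (U' $ i $ j)\<^sup>2 + 2 * ((U - U') $ i $ j)\<^sup>2)"
      unfolding frob_sq_def
    proof (intro sum_mono)
      fix i j
      have sq: "(a::real)\<^sup>2 \<le> 2 * b\<^sup>2 + 2 * (a - b)\<^sup>2" for a b
      proof -
        have "(a - 2 * b)\<^sup>2 = 2 * b\<^sup>2 + 2 * (a - b)\<^sup>2 - a\<^sup>2"
          by (simp add: power2_eq_square algebra_simps)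
        moreover have "(a - 2 * b)\<^sup>2 \<ge> 0" by simp
        ultimately show ?thesis by linarith
      qed
      have "(U $ i $ j)\<^sup>2 \<le> 2 * (U' $ i $ j)\<^sup>2 + 2 * (U $ i $ j - U' $ i $ j)\<^sup>2"
        by (rule sq)
      then show "(U $ i $ j)\<^sup>2 \<le> 2 * (U' $ i $ j)\<^sup>2 + 2 * ((U - U') $ i $ j)\<^sup>2" by simp
    qed
    also have "\<dots> = 2 * frob_sq U' + 2 * frob_sq (U - U')"
      unfolding frob_sq_def by (simp add: sum.distrib sum_distrib_left)
    finally show ?thesis .
  qed
  have fU': "frob_sq U' \<ge> 0" by (rule frob_sq_nonneg)
  have fA: "frob_sq U \<le> 98 * \<sigma>\<^sup>2 * n ^ 3 + 2 * n * frob_sq U'"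
  proof -
    have "2 * frob_sq U' \<le> 2 * n * frob_sq U'" using n1 fU' by (simp add: mult_right_mono)
    then show ?thesis using f1 D unfolding n_def by linarith
  qed
  define w where "w i = (SOME w. (\<forall>k. k \<noteq> i \<longrightarrow> U $ k \<bullet> w = 0) \<and> U $ i \<bullet> w = 1 \<and> norm w \<le> 1 / t)" for i
  have w: "(\<forall>k. k \<noteq> i \<longrightarrow> U $ k \<bullet> w i = 0) \<and> U $ i \<bullet> w i = 1 \<and> norm (w i) \<le> 1 / t" for i
    unfolding w_def using G[of i] unfolding goodrow_def by (rule someI_ex)
  define W :: "real^'r^'n" where "W = (\<chi> a i. w i $ a)"
  have UW: "U ** W = mat 1"
  proof -
    have "(U ** W) $ k $ i = (if k = i then 1 else 0)" for k i
    proof -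
      have "(U ** W) $ k $ i = U $ k \<bullet> w i"
        by (simp add: matrix_matrix_mult_def W_def inner_vec_def)
      then show ?thesis using w[of i] by auto
    qed
    then show ?thesis by (simp add: vec_eq_iff mat_def)
  qed
  have fW: "frob_sq W \<le> r / t\<^sup>2"
  proof -
    have "frob_sq W = (\<Sum>i\<in>UNIV. (norm (w i))\<^sup>2)"
      unfolding frob_sq_def W_def power2_norm_eq_inner inner_vec_def
      by (simp add: sum.swap[of _ "UNIV::'n set"] power2_eq_square)
    also have "\<dots> \<le> (\<Sum>i\<in>(UNIV::'r set). (1 / t)\<^sup>2)"
      using w by (intro sum_mono power_mono) auto
    also have "\<dots> = r / t\<^sup>2" unfolding r_def by (simp add: power_divide)
    finally show ?thesis .
  qed
  have fP: "frob_sq (pinv U) \<le> exp 2 * n ^ 4 / \<sigma>\<^sup>2"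
  proof -
    have "frob_sq (pinv U) \<le> r / t\<^sup>2" using pinv_frob_le[OF UW] fW by linarith
    also have "r / t\<^sup>2 = r * (exp 1 * n * sqrt n)\<^sup>2 / \<sigma>\<^sup>2"
      unfolding tdef n_def[symmetric] using sig n1 by (simp add: power_divide field_simps)
    also have "(exp 1 * n * sqrt n)\<^sup>2 = exp 2 * n ^ 3"
    proof -
      have e: "exp (2::real) = exp 1 * exp 1" by (simp add: mult_exp_exp)
      have s: "sqrt n * sqrt n = n" using n1 by simp
      have "(exp 1 * n * sqrt n)\<^sup>2 = (exp 1 * exp 1) * (n * n) * (sqrt n * sqrt n)"
        by (simp add: power2_eq_square algebra_simps)
      also have "\<dots> = exp 2 * n ^ 3" unfolding e s by (simp add: power3_eq_cube)
      finally show ?thesis .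
    qed
    also have "r * (exp 2 * n ^ 3) / \<sigma>\<^sup>2 \<le> n * (exp 2 * n ^ 3) / \<sigma>\<^sup>2"
      using rn' sig n1 by (intro divide_right_mono mult_right_mono) auto
    also have "n * (exp 2 * n ^ 3) / \<sigma>\<^sup>2 = exp 2 * n ^ 4 / \<sigma>\<^sup>2"
      by (simp add: power_numeral_reduce)
    finally show ?thesis .
  qed
  show ?thesis unfolding kappa_def using fA fP unfolding n_def by linarith
qed


lemma final_arith:
  fixes n r \<sigma> t :: real
  assumes n1: "n \<ge> 1" and rn: "r \<le> n" and r0: "r \<ge> 0" and sig: "\<sigma> > 0"
    and tdef: "t = \<sigma> / (exp 1 * n * sqrt n)"
  shows "r * n * \<sigma>\<^sup>2 / (49 * \<sigma>\<^sup>2 * n ^ 3) + r * (2 * t / sqrt (2 * pi * \<sigma>\<^sup>2))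
         \<le> 1 / sqrt n + exp (- 2 * n / pi\<^sup>2)"
proof -
  have sn: "sqrt n \<ge> 1" using n1 by simp
  have snn: "sqrt n * sqrt n = n" using n1 by simp
  have snle: "sqrt n \<le> n"
  proof -
    have "sqrt n * 1 \<le> sqrt n * sqrt n" using sn by (intro mult_left_mono) auto
    then show ?thesis using snn by simp
  qed
  have e2: "exp 1 \<ge> (2::real)" using exp_ge_add_one_self[of 1] by simp
  have A: "r * n * \<sigma>\<^sup>2 / (49 * \<sigma>\<^sup>2 * n ^ 3) \<le> 1 / (2 * sqrt n)"
  proof -
    have "r * n * \<sigma>\<^sup>2 / (49 * \<sigma>\<^sup>2 * n ^ 3) = r / (49 * n * n)"
      using sig n1 by (simp add: power3_eq_cube)
    also have "\<dots> \<le> n / (49 * n * n)" using rn n1 by (intro divide_right_mono) auto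
    also have "\<dots> = 1 / (49 * n)" using n1 by simp
    also have "\<dots> \<le> 1 / (2 * sqrt n)" using snle sn n1 by (intro divide_left_mono) auto
    finally show ?thesis .
  qed
  have sq: "sqrt (2 * pi * \<sigma>\<^sup>2) \<ge> 2 * \<sigma>"
  proof -
    have "4 * \<sigma>\<^sup>2 \<le> (2 * pi) * \<sigma>\<^sup>2" by (rule mult_right_mono) (use pi_gt3 in auto)
    then have "(2 * \<sigma>)\<^sup>2 \<le> 2 * pi * \<sigma>\<^sup>2" by (simp add: power_mult_distrib)
    then show ?thesis by (rule real_le_rsqrt)
  qed
  have B: "r * (2 * t / sqrt (2 * pi * \<sigma>\<^sup>2)) \<le> 1 / (2 * sqrt n)"
  proof -
    have t0: "t \<ge> 0" unfolding tdef using sig n1 by simp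
    have "2 * t / sqrt (2 * pi * \<sigma>\<^sup>2) \<le> 2 * t / (2 * \<sigma>)"
      using sq sig t0 by (intro divide_left_mono) auto
    also have "\<dots> = 1 / (exp 1 * n * sqrt n)" unfolding tdef using sig by simp
    finally have "r * (2 * t / sqrt (2 * pi * \<sigma>\<^sup>2)) \<le> r * (1 / (exp 1 * n * sqrt n))"
      using r0 by (rule mult_left_mono)
    also have "\<dots> \<le> n * (1 / (exp 1 * n * sqrt n))" using rn n1 sn by (intro mult_right_mono) auto
    also have "\<dots> = 1 / (exp 1 * sqrt n)" using n1 by simp
    also have "\<dots> \<le> 1 / (2 * sqrt n)" using e2 sn by (intro divide_left_mono mult_right_mono) auto
    finally show ?thesis .
  qed
  have "1 / (2 * sqrt n) + 1 / (2 * sqrt n) = 1 / sqrt n" by simp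
  moreover have "exp (- 2 * n / pi\<^sup>2) \<ge> 0" by simp
  ultimately show ?thesis using A B by linarith
qed

theorem theorem6p6:
  fixes U' :: "real^'n::finite^'r::finite" and \<sigma> :: real
  assumes "CARD('r) \<le> CARD('n)" and "\<sigma> > 0"
  shows "measure (gauss_matrix_measure U' \<sigma>)
           {X \<in> space (gauss_matrix_measure U' \<sigma>).
              kappa (mat_of_entries X)
                \<le> 98 * \<sigma>\<^sup>2 * real CARD('n) ^ 3 + 2 * real CARD('n) * frob_sq U'
                   + exp 2 * real CARD('n) ^ 4 / \<sigma>\<^sup>2}
         \<ge> 1 - (1 / sqrt (real CARD('n)) + exp (- 2 * real CARD('n) / pi\<^sup>2))"
proof -
  note rn = assms(1) and sig = assms(2)
  define n where "n = real CARD('n)"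
  define r where "r = real CARD('r)"
  have n1: "n \<ge> 1" unfolding n_def by (simp add: Suc_leI)
  define c where "c = 98 * \<sigma>\<^sup>2 * n ^ 3 + 2 * n * frob_sq U' + exp 2 * n ^ 4 / \<sigma>\<^sup>2"
  define m where "m p = U' $ fst p $ snd p" for p
  define MM where "MM = gauss_matrix_measure U' \<sigma>"
  define N where "N = (\<lambda>p. density lborel (normal_density (m p) \<sigma>))"
  have MMeq: "MM = PiM UNIV N"
    unfolding MM_def gauss_matrix_measure_def m_def N_def by (intro PiM_cong) (auto simp: split_beta)
  have pN: "prob_space (N p)" for p unfolding N_def using prob_space_normal_density sig by blast
  interpret MM: prob_space MM unfolding MMeq by (rule prob_space_PiM) (rule pN)
  have setsMM: "sets MM = sets borel"
  proof -
    have "sets MM = sets (PiM UNIV (\<lambda>_::'r\<times>'n. borel::real measure))"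
      unfolding MMeq N_def by (intro sets_PiM_cong) auto
    also have "\<dots> = sets borel" by (rule sets_PiM_equal_borel)
    finally show ?thesis .
  qed
  have cont_meas: "f \<in> borel_measurable MM" if "continuous_on UNIV f" for f :: "('r\<times>'n \<Rightarrow> real) \<Rightarrow> 'b::topological_space"
    unfolding measurable_cong_sets[OF setsMM refl] using that by (rule borel_measurable_continuous_onI)
  have matc: "continuous_on UNIV (mat_of_entries :: ('r\<times>'n \<Rightarrow> real) \<Rightarrow> real^'n^'r)"
    unfolding mat_of_entries_def by (intro continuous_intros continuous_on_product_coordinates)
  have closed_meas: "{X \<in> space MM. mat_of_entries X \<in> K} \<in> sets MM" if "closed K" for K :: "(real^'n^'r) set"
  proof -
    have "mat_of_entries -` K \<inter> space MM \<in> sets MM"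
      using cont_meas[OF matc] borel_closed[OF that] by (rule measurable_sets)
    moreover have "mat_of_entries -` K \<inter> space MM = {X \<in> space MM. mat_of_entries X \<in> K}" by auto
    ultimately show ?thesis by simp
  qed
  define Good where "Good = {X \<in> space MM. kappa (mat_of_entries X) \<le> c}"
  have Goodm: "Good \<in> sets MM" unfolding Good_def using closed_meas[OF closed_kappa[of c]] by simp
  define t where "t = \<sigma> / (exp 1 * n * sqrt n)"
  have t0: "t > 0" unfolding t_def using sig n1 by simp
  have closed_good: "closed {A::real^'n^'r. goodrow A i t}" for i
  proof -
    define T where "T = {p::(real^'n) \<times> (real^'n^'r). (\<forall>k. k \<noteq> i \<longrightarrow> snd p $ k \<bullet> fst p = 0) \<and> snd p $ i \<bullet> fst p = 1}"
    have cT: "closed T" unfolding T_def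
    proof (intro closed_Collect_conj closed_Collect_all)
      fix k show "closed {p::(real^'n) \<times> (real^'n^'r). k \<noteq> i \<longrightarrow> snd p $ k \<bullet> fst p = 0}"
        by (cases "k = i") (simp_all add: closed_Collect_eq continuous_intros)
      show "closed {p::(real^'n) \<times> (real^'n^'r). snd p $ i \<bullet> fst p = 1}"
        by (intro closed_Collect_eq continuous_intros)
    qed
    have "{A::real^'n^'r. goodrow A i t} = {A. \<exists>w. w \<in> cball 0 (1/t) \<and> (w, A) \<in> T}"
      unfolding goodrow_def T_def by auto
    then show ?thesis using closed_compact_projection[OF compact_cball[of "0::real^'n" "1/t"] cT] by (simp add: dist_0_norm)
  qed
  define B where "B i = space MM - {X \<in> space MM. mat_of_entries X \<in> {A. goodrow A i t}}" for i
  have Bm: "B i \<in> sets MM" for i unfolding B_def using closed_meas[OF closed_good] by auto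
  have Bb: "measure MM (B i) \<le> 2 * t / sqrt (2 * pi * \<sigma>\<^sup>2)" for i
  proof -
    have "emeasure MM (B i) \<le> ennreal (2 * t / sqrt (2 * pi * \<sigma>\<^sup>2))"
      unfolding MMeq N_def
      by (rule row_bad[OF rn sig t0]) (use Bm in \<open>auto simp: B_def MMeq N_def\<close>)
    moreover have "0 \<le> 2 * t / sqrt (2 * pi * \<sigma>\<^sup>2)" using t0 by simp
    ultimately show ?thesis using MM.emeasure_eq_measure[of "B i"] by (simp add: ennreal_le_iff)
  qed
  define D where "D X = (\<Sum>p\<in>UNIV. (X p - m p)\<^sup>2)" for X
  define Aev where "Aev = {X \<in> space MM. 49 * \<sigma>\<^sup>2 * n ^ 3 < D X}"
  have Am: "Aev \<in> sets MM"
  proof -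
    have "D \<in> borel_measurable MM" unfolding D_def
      by (intro cont_meas continuous_intros continuous_on_product_coordinates)
    then show ?thesis unfolding Aev_def by measurable
  qed
  have Ab: "measure MM Aev \<le> r * n * \<sigma>\<^sup>2 / (49 * \<sigma>\<^sup>2 * n ^ 3)"
  proof -
    have "emeasure MM Aev \<le> ennreal (real CARD('r\<times>'n) * \<sigma>\<^sup>2 / (49 * \<sigma>\<^sup>2 * n ^ 3))"
      unfolding Aev_def D_def MMeq N_def
      by (rule markov_sq[OF sig]) (use sig n1 in simp)
    moreover have "real CARD('r\<times>'n) = r * n" unfolding r_def n_def by simp
    ultimately have le: "emeasure MM Aev \<le> ennreal (r * n * \<sigma>\<^sup>2 / (49 * \<sigma>\<^sup>2 * n ^ 3))" by metis
    have nn: "0 \<le> r * n * \<sigma>\<^sup>2 / (49 * \<sigma>\<^sup>2 * n ^ 3)" using n1 unfolding r_def by simp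
    show ?thesis using le ennreal_le_iff[OF nn] MM.emeasure_eq_measure[of Aev] by metis
  qed
  have sub: "space MM - (Aev \<union> (\<Union>i. B i)) \<subseteq> Good"
  proof
    fix X assume X: "X \<in> space MM - (Aev \<union> (\<Union>i. B i))"
    have DX: "D X \<le> 49 * \<sigma>\<^sup>2 * n ^ 3" using X unfolding Aev_def by auto
    have gr: "goodrow (mat_of_entries X) i t" for i using X unfolding B_def by auto
    have "frob_sq (mat_of_entries X - U') = D X"
      unfolding frob_sq_def D_def mat_of_entries_def m_def
      by (simp add: UNIV_Times_UNIV[symmetric] sum.cartesian_product split_beta del: UNIV_Times_UNIV)
    then have "kappa (mat_of_entries X) \<le> c"
      unfolding c_def n_def
      using det_bound[OF rn sig t_def[unfolded n_def], of "mat_of_entries X" U'] DX gr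
      unfolding n_def by auto
    then show "X \<in> Good" using X unfolding Good_def by auto
  qed
  have u1: "measure MM (Aev \<union> (\<Union>i. B i)) \<le> measure MM Aev + measure MM (\<Union>i. B i)"
    using Am Bm by (intro measure_Un_le) auto
  have u2: "measure MM (\<Union>i. B i) \<le> (\<Sum>i\<in>UNIV. measure MM (B i))"
    using Bm by (intro measure_UNION_le) auto
  have "(\<Sum>i\<in>UNIV. measure MM (B i)) \<le> (\<Sum>i\<in>(UNIV::'r set). 2 * t / sqrt (2 * pi * \<sigma>\<^sup>2))"
    by (intro sum_mono Bb)
  also have "\<dots> = r * (2 * t / sqrt (2 * pi * \<sigma>\<^sup>2))" unfolding r_def by simp
  finally have u3: "(\<Sum>i\<in>UNIV. measure MM (B i)) \<le> r * (2 * t / sqrt (2 * pi * \<sigma>\<^sup>2))" .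
  have U: "measure MM (Aev \<union> (\<Union>i. B i)) \<le> r * n * \<sigma>\<^sup>2 / (49 * \<sigma>\<^sup>2 * n ^ 3) + r * (2 * t / sqrt (2 * pi * \<sigma>\<^sup>2))"
    using u1 u2 u3 Ab by linarith
  have "1 - (1 / sqrt n + exp (- 2 * n / pi\<^sup>2)) \<le> 1 - measure MM (Aev \<union> (\<Union>i. B i))"
    using U final_arith[OF n1 _ _ sig t_def, of r] rn unfolding r_def n_def by simp
  also have "\<dots> = measure MM (space MM - (Aev \<union> (\<Union>i. B i)))"
    using Am Bm by (subst MM.prob_compl) auto
  also have "\<dots> \<le> measure MM Good" using sub Goodm by (rule MM.finite_measure_mono)
  finally show ?thesis unfolding Good_def MM_def c_def n_def .
qed

end
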